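(* Consider the following local network approximation algorithm run by every process in a synchronous system. If, at the end of some round $r$, the graph $A_p|t$ of process $p$ contains the edge $(v\to w)$, then (i) $(v\to w)\in\mathcal{G}^t$, i.e., $A_p|t\subseteq\mathcal{G}^t$; and (ii) $A_p|t$ also contains the edge $(v'\to w)$ for every $v'\in\mathcal{N}_w^t$.
   Context: A finite set $\Pi$ of $n\ge2$ processes computes in synchronous lock-step rounds $r=1,2,\dots$. An adversary fixes an arbitrary infinite sequence of simple directed graphs $\mathcal{G}^1,\mathcal{G}^2,\dots$ on vertex set $\Pi$; $(p\to q)\in\mathcal{G}^r$ iff $q$ receives $p$'s round-$r$ message in round $r$. In each round every process broadcasts one message, received exactly by its out-neighbours in $\mathcal{G}^r$, and then updates its state based on the messages received in that round. Let $\mathcal{N}_p^r=\{q:(q\to p)\in\mathcal{G}^r\}$. Algorithm: each process $p$ maintains a directed graph $A_p=(V_p,E_p)$ without loops or multi-edges whose edges carry labels that are sets of round numbers; initially $A_p=(\{p\},\emptyset)$. In round $r$, $p$ sends its current $A_p$ to all its out-neighbours, and then, for each $q\in\mathcal{N}_p^r$ with received graph $A_q$: if $E_p$ contains an edge $(q\to p)$ with label $T$, its label is replaced by $T\cup\{r\}$, otherwise the edge $(q\to p)$ with label $\{r\}$ is added; and $V_p\leftarrow V_p\cup V_q$. Afterwards, for every pair of distinct nodes $(p_i,p_j)\in V_p\times V_p$, let $T'$ be the union of the labels $S$ of all edges $(p_i\to p_j)$ in the received graphs $A_q$, $q\in\mathcal{N}_p^r$; if $T'\neq\emptyset$, the label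 $T$ of the edge $(p_i\to p_j)$ in $E_p$ is replaced by $T\cup T'$, or the edge $(p_i\to p_j)$ with label $T'$ is added if no such edge exists. For a round $t$, $A_p|t$ denotes the graph whose edges are the edges of $A_p$ whose label contains $t$. *)

theory Defs
  imports Main
begin

(* A communication pattern: G r is the set of directed edges (p,q) of round r
   (q receives p's round-r message).  Simple graphs: no self-loops. *)
definition simple_pattern :: "(nat \<Rightarrow> ('p \<times> 'p) set) \<Rightarrow> bool" where
  "simple_pattern G \<longleftrightarrow> (\<forall>r p. (p, p) \<notin> G r)"

definition in_nbrs :: "(nat \<Rightarrow> ('p \<times> 'p) set) \<Rightarrow> nat \<Rightarrow> 'p \<Rightarrow> 'p set" where
  "in_nbrs G r p = {q. (q, p) \<in> G r}"

(* Local state A_p = (V_p, E_p) of process p at the end of round r (r = 0: initial state).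
   E_p is represented by its labelling: lbl a b is the label set of edge (a -> b);
   the edge is present iff its label is non-empty. *)
primrec alg_state :: "(nat \<Rightarrow> ('p \<times> 'p) set) \<Rightarrow> nat \<Rightarrow> 'p \<Rightarrow> 'p set \<times> ('p \<Rightarrow> 'p \<Rightarrow> nat set)" where
  "alg_state G 0 p = ({p}, (\<lambda>_ _. {}))"
| "alg_state G (Suc r) p =
     (let N = in_nbrs G (Suc r) p;
          V' = fst (alg_state G r p) \<union> (\<Union>q\<in>N. fst (alg_state G r q));
          L1 = (\<lambda>a b. snd (alg_state G r p) a b \<union>
                       (if b = p \<and> a \<in> N then {Suc r} else {}));
          L2 = (\<lambda>a b. L1 a b \<union>
                       (if a \<in> V' \<and> b \<in> V' \<and> a \<noteq> b
                        then (\<Union>q\<in>N. snd (alg_state G r q) a b) else {}))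
      in (V', L2))"

definition restr_graph :: "(nat \<Rightarrow> ('p \<times> 'p) set) \<Rightarrow> nat \<Rightarrow> 'p \<Rightarrow> nat \<Rightarrow> ('p \<times> 'p) set" where
  "restr_graph G r p t = {(a, b). t \<in> snd (alg_state G r p) a b}"

end

theory Submission
  imports Defs
begin

lemma self_in: "p \<in> fst (alg_state G r p)"
  by (induction r) (auto simp: Let_def)

lemma inv:
  assumes sp: "simple_pattern G"
  shows "\<forall>p a b t. t \<in> snd (alg_state G r p) a b \<longrightarrow> t \<le> r \<and> (a, b) \<in> G t \<and>
     (\<forall>v' \<in> in_nbrs G t b. t \<in> snd (alg_state G r p) v' b \<and> v' \<in> fst (alg_state G r p))"
proof (induction r)
  case 0
  then show ?case by simp
next
  case (Suc r)
  show ?case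
  proof (intro allI impI)
    fix p a b t
    assume h: "t \<in> snd (alg_state G (Suc r) p) a b"
    define N where "N = in_nbrs G (Suc r) p"
    define V' where "V' = fst (alg_state G r p) \<union> (\<Union>q\<in>N. fst (alg_state G r q))"
    have V: "fst (alg_state G (Suc r) p) = V'" by (simp add: V'_def N_def Let_def)
    have L: "\<And>a b. snd (alg_state G (Suc r) p) a b = snd (alg_state G r p) a b \<union>
                       (if b = p \<and> a \<in> N then {Suc r} else {}) \<union>
                       (if a \<in> V' \<and> b \<in> V' \<and> a \<noteq> b
                        then (\<Union>q\<in>N. snd (alg_state G r q) a b) else {})"
      by (simp add: V'_def N_def Let_def)
    have nl: "\<And>x s. (x, x) \<notin> G s" using sp by (simp add: simple_pattern_def)
    have nb: "\<And>x y s. x \<in> in_nbrs G s y \<Longrightarrow> x \<noteq> y" using nl by (auto simp: in_nbrs_def)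
    from h[unfolded L] consider
        (c_old) "t \<in> snd (alg_state G r p) a b"
      | (c_new) "b = p" "a \<in> N" "t = Suc r"
      | (c_prop) q where "q \<in> N" "a \<in> V'" "b \<in> V'" "a \<noteq> b" "t \<in> snd (alg_state G r q) a b"
      by (auto split: if_splits)
    then show "t \<le> Suc r \<and> (a, b) \<in> G t \<and>
     (\<forall>v' \<in> in_nbrs G t b. t \<in> snd (alg_state G (Suc r) p) v' b \<and> v' \<in> fst (alg_state G (Suc r) p))"
    proof cases
      case c_old
      with Suc.IH have "t \<le> r \<and> (a, b) \<in> G t \<and>
       (\<forall>v' \<in> in_nbrs G t b. t \<in> snd (alg_state G r p) v' b \<and> v' \<in> fst (alg_state G r p))"
        by blast
      then show ?thesis unfolding V L V'_def by auto
    next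
      case c_new
      then show ?thesis unfolding V L V'_def N_def
        by (auto simp: in_nbrs_def intro: self_in)
    next
      case c_prop
      with Suc.IH have I: "t \<le> r \<and> (a, b) \<in> G t \<and>
       (\<forall>v' \<in> in_nbrs G t b. t \<in> snd (alg_state G r q) v' b \<and> v' \<in> fst (alg_state G r q))"
        by blast
      have "\<forall>v' \<in> in_nbrs G t b. t \<in> snd (alg_state G (Suc r) p) v' b \<and> v' \<in> V'"
      proof
        fix v' assume v': "v' \<in> in_nbrs G t b"
        with I have a1: "t \<in> snd (alg_state G r q) v' b" and a2: "v' \<in> V'"
          using c_prop(1) unfolding V'_def by auto
        have "v' \<noteq> b" using nb v' by blast
        then show "t \<in> snd (alg_state G (Suc r) p) v' b \<and> v' \<in> V'"
          unfolding L using a1 a2 c_prop by auto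
      qed
      then show ?thesis using I V by auto
    qed
  qed
qed

theorem lemma7:
  fixes G :: "nat \<Rightarrow> ('p::finite \<times> 'p) set"
  assumes "card (UNIV :: 'p set) \<ge> 2"
    and "simple_pattern G"
    and "(v, w) \<in> restr_graph G r p t"
  shows "(v, w) \<in> G t \<and> (\<forall>v' \<in> in_nbrs G t w. (v', w) \<in> restr_graph G r p t)"
  using inv[OF assms(2), of r] assms(3) unfolding restr_graph_def by blast

end
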